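(* Let $\ell,\beta,m,s>0$ and $d_{11},d_{22},d_{21},\xi\ge 0$, and consider the Holling–Tanner system with spatial memory and predator-taxis \[ \begin{aligned} u_t&=d_{11}u_{xx}+\xi\,(u\,v_x)_x+u(1-\beta u)-\frac{muv}{1+u},\\ v_t&=d_{22}v_{xx}-d_{21}\,\big(v(x,t)\,u_x(x,t-\tau)\big)_x+sv\Big(1-\frac{v}{u}\Big), \end{aligned}\qquad x\in(0,\ell\pi),\ t>0, \] with homogeneous Neumann boundary conditions $u_x=v_x=0$ at $x=0,\ell\pi$ and memory delay $\tau\ge0$. Let $E_*=(u_*,v_* )$, the quantities $a_{ij}$, $T_n$, $J_n$, $K_n$, $P_n$, $Q_n$, $n_1,n_2$, $\omega_n$, $\tau_{n,j}$ be as defined in the context. Suppose that $d_{11}d_{22}-d_{21}\xi u_*v_*>0$, that condition $a_{11}<0$ holds, and that \[ \operatorname{Det}(A)>0,\quad \widetilde A_1>0,\quad \widetilde A_1^2-4\widetilde A_2\operatorname{Det}(A)>0 . \] Let $n\in\mathbb{N}$ with $n_1<n<n_2$ and $j\in\mathbb{N}_0$, and let $\lambda(\tau)$ be the root of the characteristic equation \[ \lambda^2-T_n\lambda+\widetilde J_n(\tau)=0,\qquad \widetilde J_n(\tau)=\big(d_{11}d_{22}+d_{21}\xi u_*v_*e^{-\lambda\tau}\big)\frac{n^4}{\ell^4}-\big(d_{11}a_{22}+d_{22}a_{11}-a_{21}\xi u_*+d_{21}v_*a_{12}e^{-\lambda\tau}\big)\frac{n^2}{\ell^2}+\operatorname{Det}(A),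 \] depending smoothly on $\tau$ near $\tau_{n,j}$ with $\lambda(\tau_{n,j})=i\omega_n$. Then \[ \left.\frac{d\,\operatorname{Re}\lambda(\tau)}{d\tau}\right|_{\tau=\tau_{n,j}}>0 . \]
   Context: Definitions: $u_*=v_*=\frac{1}{2\beta}\big(\sqrt{R^2+4\beta}-R\big)$ with $R=\beta+m-1$ (the positive constant steady state). $a_{11}=1-2\beta u_*-\frac{mu_*}{(1+u_* )^2}$, $a_{12}=-\frac{mu_*}{1+u_*}$, $a_{21}=s$, $a_{22}=-s$; $A=(a_{ij})$, $\operatorname{Det}(A)=a_{11}a_{22}-a_{12}a_{21}$. For $n\in\mathbb{N}_0$: $T_n=a_{11}+a_{22}-(d_{11}+d_{22})\frac{n^2}{\ell^2}$; $J_n=d_{11}d_{22}\frac{n^4}{\ell^4}-(d_{11}a_{22}+d_{22}a_{11}-a_{21}\xi u_* )\frac{n^2}{\ell^2}+\operatorname{Det}(A)$; $K_n=d_{21}\xi u_*v_*\frac{n^4}{\ell^4}-d_{21}v_*a_{12}\frac{n^2}{\ell^2}$; $P_n=T_n^2-2J_n$; $Q_n=(J_n+K_n)(J_n-K_n)$. Further $\widetilde A_1=d_{11}a_{22}+d_{22}a_{11}-a_{21}\xi u_*-d_{21}v_*a_{12}$, $\widetilde A_2=d_{11}d_{22}-d_{21}\xi u_*v_*$, $\widetilde A_3=\widetilde A_1^2-4\widetilde A_2\operatorname{Det}(A)$, $\widetilde x_{1,2}=\frac{\widetilde A_1\mp\sqrt{\widetilde A_3}}{2\widetilde A_2}$,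 $n_1=\ell\sqrt{\widetilde x_1}$, $n_2=\ell\sqrt{\widetilde x_2}$. For $n_1<n<n_2$: $\omega_n=\sqrt{\frac{-P_n+\sqrt{P_n^2-4Q_n}}{2}}$ and $\tau_{n,j}=\frac{1}{\omega_n}\Big(\arccos\frac{\omega_n^2-J_n}{K_n}+2j\pi\Big)$, $j\in\mathbb{N}_0$. *)

theory Defs
  imports "HOL-Analysis.Analysis"
begin

definition ustar :: "real \<Rightarrow> real \<Rightarrow> real" where
  "ustar beta m = (let R = beta + m - 1 in (sqrt (R^2 + 4*beta) - R) / (2*beta))"

definition vstar :: "real \<Rightarrow> real \<Rightarrow> real" where
  "vstar beta m = ustar beta m"

definition a11 :: "real \<Rightarrow> real \<Rightarrow> real" where
  "a11 beta m = 1 - 2*beta*ustar beta m - m * ustar beta m / (1 + ustar beta m)^2"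

definition a12 :: "real \<Rightarrow> real \<Rightarrow> real" where
  "a12 beta m = - (m * ustar beta m / (1 + ustar beta m))"

definition a21 :: "real \<Rightarrow> real" where
  "a21 s = s"

definition a22 :: "real \<Rightarrow> real" where
  "a22 s = - s"

definition DetA :: "real \<Rightarrow> real \<Rightarrow> real \<Rightarrow> real" where
  "DetA beta m s = a11 beta m * a22 s - a12 beta m * a21 s"

definition Tn :: "real \<Rightarrow> real \<Rightarrow> real \<Rightarrow> real \<Rightarrow> real \<Rightarrow> real \<Rightarrow> nat \<Rightarrow> real" where
  "Tn l beta m s d11 d22 n = a11 beta m + a22 s - (d11 + d22) * (real n)^2 / l^2"

definition Jn :: "real \<Rightarrow> real \<Rightarrow> real \<Rightarrow> real \<Rightarrow> real \<Rightarrow> real \<Rightarrow> real \<Rightarrow> nat \<Rightarrow> real" where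
  "Jn l beta m s d11 d22 xi n =
     d11 * d22 * (real n)^4 / l^4
     - (d11 * a22 s + d22 * a11 beta m - a21 s * xi * ustar beta m) * (real n)^2 / l^2
     + DetA beta m s"

definition Kn :: "real \<Rightarrow> real \<Rightarrow> real \<Rightarrow> real \<Rightarrow> real \<Rightarrow> nat \<Rightarrow> real" where
  "Kn l beta m d21 xi n =
     d21 * xi * ustar beta m * vstar beta m * (real n)^4 / l^4
     - d21 * vstar beta m * a12 beta m * (real n)^2 / l^2"

definition Pn :: "real \<Rightarrow> real \<Rightarrow> real \<Rightarrow> real \<Rightarrow> real \<Rightarrow> real \<Rightarrow> real \<Rightarrow> nat \<Rightarrow> real" where
  "Pn l beta m s d11 d22 xi n = (Tn l beta m s d11 d22 n)^2 - 2 * Jn l beta m s d11 d22 xi n"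

definition Qn :: "real \<Rightarrow> real \<Rightarrow> real \<Rightarrow> real \<Rightarrow> real \<Rightarrow> real \<Rightarrow> real \<Rightarrow> real \<Rightarrow> nat \<Rightarrow> real" where
  "Qn l beta m s d11 d22 d21 xi n =
     (Jn l beta m s d11 d22 xi n + Kn l beta m d21 xi n) * (Jn l beta m s d11 d22 xi n - Kn l beta m d21 xi n)"

definition At1 :: "real \<Rightarrow> real \<Rightarrow> real \<Rightarrow> real \<Rightarrow> real \<Rightarrow> real \<Rightarrow> real \<Rightarrow> real" where
  "At1 beta m s d11 d22 d21 xi =
     d11 * a22 s + d22 * a11 beta m - a21 s * xi * ustar beta m - d21 * vstar beta m * a12 beta m"

definition At2 :: "real \<Rightarrow> real \<Rightarrow> real \<Rightarrow> real \<Rightarrow> real \<Rightarrow> real \<Rightarrow> real" where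
  "At2 beta m d11 d22 d21 xi = d11 * d22 - d21 * xi * ustar beta m * vstar beta m"

definition At3 :: "real \<Rightarrow> real \<Rightarrow> real \<Rightarrow> real \<Rightarrow> real \<Rightarrow> real \<Rightarrow> real \<Rightarrow> real" where
  "At3 beta m s d11 d22 d21 xi =
     (At1 beta m s d11 d22 d21 xi)^2 - 4 * At2 beta m d11 d22 d21 xi * DetA beta m s"

definition xt1 :: "real \<Rightarrow> real \<Rightarrow> real \<Rightarrow> real \<Rightarrow> real \<Rightarrow> real \<Rightarrow> real \<Rightarrow> real" where
  "xt1 beta m s d11 d22 d21 xi =
     (At1 beta m s d11 d22 d21 xi - sqrt (At3 beta m s d11 d22 d21 xi)) / (2 * At2 beta m d11 d22 d21 xi)"

definition xt2 :: "real \<Rightarrow> real \<Rightarrow> real \<Rightarrow> real \<Rightarrow> real \<Rightarrow> real \<Rightarrow> real \<Rightarrow> real" where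
  "xt2 beta m s d11 d22 d21 xi =
     (At1 beta m s d11 d22 d21 xi + sqrt (At3 beta m s d11 d22 d21 xi)) / (2 * At2 beta m d11 d22 d21 xi)"

definition n1 :: "real \<Rightarrow> real \<Rightarrow> real \<Rightarrow> real \<Rightarrow> real \<Rightarrow> real \<Rightarrow> real \<Rightarrow> real \<Rightarrow> real" where
  "n1 l beta m s d11 d22 d21 xi = l * sqrt (xt1 beta m s d11 d22 d21 xi)"

definition n2 :: "real \<Rightarrow> real \<Rightarrow> real \<Rightarrow> real \<Rightarrow> real \<Rightarrow> real \<Rightarrow> real \<Rightarrow> real \<Rightarrow> real" where
  "n2 l beta m s d11 d22 d21 xi = l * sqrt (xt2 beta m s d11 d22 d21 xi)"

definition omega_n :: "real \<Rightarrow> real \<Rightarrow> real \<Rightarrow> real \<Rightarrow> real \<Rightarrow> real \<Rightarrow> real \<Rightarrow> real \<Rightarrow> nat \<Rightarrow> real" where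
  "omega_n l beta m s d11 d22 d21 xi n =
     sqrt ((- Pn l beta m s d11 d22 xi n
            + sqrt ((Pn l beta m s d11 d22 xi n)^2 - 4 * Qn l beta m s d11 d22 d21 xi n)) / 2)"

definition tau_nj :: "real \<Rightarrow> real \<Rightarrow> real \<Rightarrow> real \<Rightarrow> real \<Rightarrow> real \<Rightarrow> real \<Rightarrow> real \<Rightarrow> nat \<Rightarrow> nat \<Rightarrow> real" where
  "tau_nj l beta m s d11 d22 d21 xi n j =
     (1 / omega_n l beta m s d11 d22 d21 xi n) *
     (arccos (((omega_n l beta m s d11 d22 d21 xi n)^2 - Jn l beta m s d11 d22 xi n)
               / Kn l beta m d21 xi n) + 2 * real j * pi)"

definition charfun :: "real \<Rightarrow> real \<Rightarrow> real \<Rightarrow> real \<Rightarrow> real \<Rightarrow> real \<Rightarrow> real \<Rightarrow> real \<Rightarrow> nat \<Rightarrow> complex \<Rightarrow> real \<Rightarrow> complex" where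
  "charfun l beta m s d11 d22 d21 xi n lam tau =
     lam^2 - complex_of_real (Tn l beta m s d11 d22 n) * lam
     + (complex_of_real (d11 * d22) + complex_of_real (d21 * xi * ustar beta m * vstar beta m) * exp (- lam * complex_of_real tau))
         * complex_of_real ((real n)^4 / l^4)
     - (complex_of_real (d11 * a22 s + d22 * a11 beta m - a21 s * xi * ustar beta m)
         + complex_of_real (d21 * vstar beta m * a12 beta m) * exp (- lam * complex_of_real tau))
         * complex_of_real ((real n)^2 / l^2)
     + complex_of_real (DetA beta m s)"

end

theory Submission
  imports Defs
begin

lemma charfun_deriv:
  fixes lam :: "real \<Rightarrow> complex"
  assumes "(lam has_vector_derivative lam') (at t0)"
  shows "((\<lambda>t. charfun l beta m s d11 d22 d21 xi n (lam t) t) has_vector_derivative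
     (2 * lam t0 * lam' - complex_of_real (Tn l beta m s d11 d22 n) * lam'
      + complex_of_real (Kn l beta m d21 xi n) * exp (- lam t0 * complex_of_real t0) * (- (lam t0 + lam' * complex_of_real t0))))
     (at t0)"
proof -
  have d1: "((\<lambda>t. lam t * complex_of_real t) has_vector_derivative (lam t0 * 1 + lam' * complex_of_real t0)) (at t0)"
    by (rule has_vector_derivative_mult[OF assms]) (auto intro!: derivative_eq_intros)
  have d2: "((\<lambda>t. - (lam t * complex_of_real t)) has_vector_derivative (- (lam t0 * 1 + lam' * complex_of_real t0))) (at t0)"
    using has_vector_derivative_minus[OF d1] .
  have dE: "((\<lambda>t. exp (- lam t * complex_of_real t)) has_vector_derivative
       (- (lam t0 * 1 + lam' * complex_of_real t0)) * exp (- lam t0 * complex_of_real t0)) (at t0)"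
    using field_vector_diff_chain_within[OF d2, of exp "exp (- (lam t0 * complex_of_real t0))"]
    by (auto simp: o_def intro: has_field_derivative_at_within DERIV_exp)
  have dsq: "((\<lambda>t. (lam t)^2) has_vector_derivative (lam t0 * lam' + lam' * lam t0)) (at t0)"
    using has_vector_derivative_mult[OF assms assms] by (simp add: power2_eq_square)
  define E where "E = (\<lambda>t. exp (- lam t * complex_of_real t))"
  have dE': "(E has_vector_derivative (- (lam t0 * 1 + lam' * complex_of_real t0)) * E t0) (at t0)"
    using dE unfolding E_def .
  have "((\<lambda>t. (lam t)^2 - complex_of_real (Tn l beta m s d11 d22 n) * lam t +
           (complex_of_real (d11 * d22) + complex_of_real (d21 * xi * ustar beta m * vstar beta m) * E t) *
           complex_of_real (real n ^ 4 / l ^ 4) -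
           (complex_of_real (d11 * a22 s + d22 * a11 beta m - a21 s * xi * ustar beta m) +
            complex_of_real (d21 * vstar beta m * a12 beta m) * E t) *
           complex_of_real ((real n)^2 / l^2) + complex_of_real (DetA beta m s)) has_vector_derivative
       ((lam t0 * lam' + lam' * lam t0) - complex_of_real (Tn l beta m s d11 d22 n) * lam'
        + (0 + complex_of_real (d21 * xi * ustar beta m * vstar beta m) * ((- (lam t0 * 1 + lam' * complex_of_real t0)) * E t0)) * complex_of_real (real n ^ 4 / l ^ 4)
        - (0 + complex_of_real (d21 * vstar beta m * a12 beta m) * ((- (lam t0 * 1 + lam' * complex_of_real t0)) * E t0)) * complex_of_real ((real n)^2 / l^2)
        + 0)) (at t0)"
    by (intro has_vector_derivative_add has_vector_derivative_diff dsq
        has_vector_derivative_mult_right[OF assms] has_vector_derivative_mult_left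
        has_vector_derivative_mult_right[OF dE'] has_vector_derivative_const)
  note h = this[unfolded E_def]
  have Kn_split: "Kn l beta m d21 xi n = (d21 * xi * ustar beta m * vstar beta m) * (real n ^ 4 / l ^ 4)
      - (d21 * vstar beta m * a12 beta m) * ((real n)^2 / l^2)"
    by (simp add: Kn_def)
  show ?thesis
    unfolding charfun_def
    apply (rule has_vector_derivative_eq_rhs[OF h])
    apply (simp only: Kn_split of_real_diff of_real_mult)
    apply (simp add: algebra_simps del: of_real_power of_real_divide)
    done
qed

lemma charfun_eq:
  "charfun l beta m s d11 d22 d21 xi n z t = z^2 - complex_of_real (Tn l beta m s d11 d22 n) * z
     + complex_of_real (Jn l beta m s d11 d22 xi n) + complex_of_real (Kn l beta m d21 xi n) * exp (- z * complex_of_real t)"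
proof -
  have Kn_split: "Kn l beta m d21 xi n = (d21 * xi * ustar beta m * vstar beta m) * (real n ^ 4 / l ^ 4)
      - (d21 * vstar beta m * a12 beta m) * ((real n)^2 / l^2)"
    by (simp add: Kn_def)
  have Jn_split: "Jn l beta m s d11 d22 xi n = (d11 * d22) * (real n ^ 4 / l ^ 4)
      - (d11 * a22 s + d22 * a11 beta m - a21 s * xi * ustar beta m) * ((real n)^2 / l^2) + DetA beta m s"
    by (simp add: Jn_def)
  show ?thesis unfolding charfun_def
    apply (simp only: Kn_split Jn_split of_real_diff of_real_mult of_real_add)
    apply (simp add: algebra_simps del: of_real_power of_real_divide)
    done
qed

lemma ustar_pos: assumes "beta > 0" shows "ustar beta m > 0"
proof -
  define R where "R = beta + m - 1"
  have "sqrt (R^2 + 4*beta) > sqrt (R^2)" using assms by (simp only: real_sqrt_less_iff)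
  moreover have "sqrt (R^2) \<ge> R" by simp
  ultimately have "sqrt (R^2 + 4*beta) > R" by linarith
  then have "sqrt (R^2 + 4*beta) - R > 0" by linarith
  then show ?thesis using assms unfolding ustar_def Let_def R_def[symmetric] by simp
qed

lemma JK_facts:
  fixes l beta m s d11 d22 d21 xi :: real and n :: nat
  assumes "l > 0" "beta > 0" "m > 0" "s > 0"
    and "d11 \<ge> 0" "d22 \<ge> 0" "d21 \<ge> 0" "xi \<ge> 0"
    and A2: "d11 * d22 - d21 * xi * ustar beta m * vstar beta m > 0"
    and "a11 beta m < 0"
    and Dp: "DetA beta m s > 0"
    and A3: "(At1 beta m s d11 d22 d21 xi)^2 - 4 * At2 beta m d11 d22 d21 xi * DetA beta m s > 0"
    and "n \<ge> 1"
    and N1: "n1 l beta m s d11 d22 d21 xi < real n" and N2: "real n < n2 l beta m s d11 d22 d21 xi"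
  shows "Jn l beta m s d11 d22 xi n + Kn l beta m d21 xi n > 0"
    and "Jn l beta m s d11 d22 xi n - Kn l beta m d21 xi n < 0"
proof -
  define u where "u = ustar beta m"
  have u: "u > 0" using ustar_pos assms unfolding u_def by blast
  define b12 where "b12 = a12 beta m"
  have b12: "b12 < 0" unfolding b12_def a12_def u_def[symmetric] using u assms by simp
  define b11 where "b11 = a11 beta m"
  have b11: "b11 < 0" using assms b11_def by simp
  define D where "D = DetA beta m s"
  define X where "X = real n ^ 2 / l ^ 2"
  have X: "X > 0" using assms unfolding X_def by simp
  have X4: "real n ^ 4 / l ^ 4 = X^2" unfolding X_def by (simp add: power_divide[symmetric] power_mult[symmetric])
  have r4: "c * real n ^ 4 / l ^ 4 = c * X^2" for c unfolding X4[symmetric] by simp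
  have r2: "c * (real n) ^ 2 / l ^ 2 = c * X" for c unfolding X_def by simp
  have JK: "Jn l beta m s d11 d22 xi n + Kn l beta m d21 xi n =
     (d11 * d22 * X^2 + d21 * xi * u * u * X^2) + d11 * s * X + (- b11) * d22 * X + s * xi * u * X + d21 * u * (- b12) * X + D"
    unfolding Jn_def Kn_def r4 r2 a21_def a22_def vstar_def u_def[symmetric] b11_def[symmetric]
      b12_def[symmetric] D_def[symmetric] by (simp add: algebra_simps)
  show "Jn l beta m s d11 d22 xi n + Kn l beta m d21 xi n > 0"
  proof -
    have t1: "d11 * d22 * X^2 \<ge> 0" using assms by simp
    have t2: "d21 * xi * u * u * X^2 \<ge> 0" using assms u by simp
    have t3: "d11 * s * X \<ge> 0" using assms X by simp
    have t4: "(- b11) * d22 * X \<ge> 0" using assms X b11 by (intro mult_nonneg_nonneg) auto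
    have t5: "s * xi * u * X \<ge> 0" using assms X u by simp
    have t6: "d21 * u * (- b12) * X \<ge> 0" using assms X u b12 by (intro mult_nonneg_nonneg) auto
    show ?thesis unfolding JK using t1 t2 t3 t4 t5 t6 Dp D_def by linarith
  qed
  define a1 where "a1 = At1 beta m s d11 d22 d21 xi"
  define a2 where "a2 = At2 beta m d11 d22 d21 xi"
  define a3 where "a3 = At3 beta m s d11 d22 d21 xi"
  have a2: "a2 > 0" using A2 unfolding a2_def At2_def .
  have a3: "a3 > 0" using A3 unfolding a3_def At3_def .
  have a3e: "a3 = a1^2 - 4*a2*D" unfolding a3_def At3_def a1_def a2_def D_def ..
  define x1 where "x1 = (a1 - sqrt a3) / (2*a2)"
  define x2 where "x2 = (a1 + sqrt a3) / (2*a2)"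
  have JmK: "Jn l beta m s d11 d22 xi n - Kn l beta m d21 xi n = a2*X^2 - a1*X + D"
    unfolding Jn_def Kn_def r4 r2 a1_def a2_def At1_def At2_def D_def by (simp add: algebra_simps)
  have sq: "sqrt a3 ^ 2 = a3" using a3 by simp
  have fac: "a2*X^2 - a1*X + D = a2*(X - x1)*(X - x2)"
  proof -
    have s12: "x1 + x2 = a1 / a2" unfolding x1_def x2_def using a2 by (simp add: field_simps)
    have "x1 * x2 = (a1^2 - sqrt a3 ^ 2) / (4 * a2^2)" unfolding x1_def x2_def using a2
      by (simp add: field_simps power2_eq_square)
    also have "\<dots> = (a1^2 - a3) / (4 * a2^2)" by (simp only: sq)
    also have "\<dots> = D / a2" unfolding a3e using a2 by (simp add: field_simps power2_eq_square)
    finally have p12: "x1 * x2 = D / a2" .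
    have "a2*(X - x1)*(X - x2) = a2*X^2 - a2*(x1+x2)*X + a2*(x1*x2)" by (simp add: algebra_simps power2_eq_square)
    also have "\<dots> = a2*X^2 - a1*X + D" unfolding s12 p12 using a2 by simp
    finally show ?thesis by simp
  qed
  have nl: "real n / l > 0" using assms by simp
  have Xe: "X = (real n / l)^2" unfolding X_def by (simp add: power_divide)
  have "l * sqrt x1 < real n" using N1 unfolding n1_def xt1_def x1_def a1_def a2_def a3_def .
  then have s1: "sqrt x1 < real n / l" using assms(1) by (simp add: pos_less_divide_eq mult.commute)
  have x1X: "x1 < X"
  proof (cases "x1 < 0")
    case True then show ?thesis using X by linarith
  next
    case False
    then have "x1 = sqrt x1 ^ 2" by simp
    also have "\<dots> < (real n / l)^2" using s1 False by (intro power_strict_mono) auto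
    finally show ?thesis unfolding Xe .
  qed
  have "real n < l * sqrt x2" using N2 unfolding n2_def xt2_def x2_def a1_def a2_def a3_def .
  then have s2: "real n / l < sqrt x2" using assms(1) by (simp add: pos_divide_less_eq mult.commute)
  have "sqrt x2 > 0" using s2 nl by linarith
  then have x2p: "x2 > 0" by simp
  have x2X: "X < x2"
  proof -
    have "(real n / l)^2 < sqrt x2 ^ 2" using s2 nl by (intro power_strict_mono) auto
    then show ?thesis unfolding Xe using x2p by simp
  qed
  show "Jn l beta m s d11 d22 xi n - Kn l beta m d21 xi n < 0"
    unfolding JmK fac using a2 x1X x2X by (simp add: mult_pos_neg)
qed
lemma key:
  fixes L lam' W :: complex and w T J t0 :: real
  assumes hL: "L = \<i> * complex_of_real w"
    and e1: "L^2 - complex_of_real T * L + complex_of_real J + W = 0"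
    and e2: "2 * L * lam' - complex_of_real T * lam' + W * (- (L + lam' * complex_of_real t0)) = 0"
    and w: "w > 0" and S: "T^2 - 2*J + 2*w^2 > 0"
  shows "Re lam' > 0"
proof -
  define p where "p = Re lam'"
  define q where "q = Im lam'"
  define a where "a = Re W"
  define b where "b = Im W"
  have r1: "a = w*w - J" and i1: "b = T*w"
    using arg_cong[OF e1, of Re] arg_cong[OF e1, of Im] hL
    by (auto simp: a_def b_def power2_eq_square)
  have r2: "2*(0-w*q) - T*p - (a*t0*p - b*(w + t0*q)) = 0"
    and i2: "2*w*p - T*q - (a*(w + t0*q) + b*t0*p) = 0"
    using arg_cong[OF e2, of Re] arg_cong[OF e2, of Im] hL
    by (auto simp: a_def b_def p_def q_def algebra_simps)
  define m1 where "m1 = - T - t0*a"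
  define m2 where "m2 = 2*w - t0*b"
  have A: "p*m1 - q*m2 = -(w*b)" using r2 unfolding m1_def m2_def by (simp add: algebra_simps)
  have B: "p*m2 + q*m1 = w*a" using i2 unfolding m1_def m2_def by (simp add: algebra_simps)
  have C: "p*(m1^2+m2^2) = m1*(p*m1 - q*m2) + m2*(p*m2 + q*m1)" by (simp add: algebra_simps power2_eq_square)
  also have "\<dots> = m1*(-(w*b)) + m2*(w*a)" by (simp only: A B)
  also have "\<dots> = w*(b*T+2*a*w)" unfolding m1_def m2_def by (simp add: algebra_simps)
  also have "\<dots> = w*w*(T^2 - 2*J + 2*w^2)" unfolding r1 i1 by (simp add: algebra_simps power2_eq_square)
  finally have D: "p*(m1^2+m2^2) = w*w*(T^2 - 2*J + 2*w^2)" .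
  have "w*w*(T^2 - 2*J + 2*w^2) > 0" using w S by simp
  then have "p*(m1^2+m2^2) > 0" using D by simp
  moreover have "m1^2+m2^2 \<ge> 0" by simp
  ultimately show ?thesis unfolding p_def using zero_less_mult_pos2 by (metis less_eq_real_def mult_zero_right zero_less_mult_iff)
qed
theorem lemma4p3:
  fixes l beta m s d11 d22 d21 xi :: real
    and n j :: nat
    and lam :: "real \<Rightarrow> complex" and lam' :: complex
  assumes "l > 0" "beta > 0" "m > 0" "s > 0"
    and "d11 \<ge> 0" "d22 \<ge> 0" "d21 \<ge> 0" "xi \<ge> 0"
    and "d11 * d22 - d21 * xi * ustar beta m * vstar beta m > 0"
    and "a11 beta m < 0"
    and "DetA beta m s > 0"
    and "At1 beta m s d11 d22 d21 xi > 0"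
    and "(At1 beta m s d11 d22 d21 xi)^2 - 4 * At2 beta m d11 d22 d21 xi * DetA beta m s > 0"
    and "n \<ge> 1"
    and "n1 l beta m s d11 d22 d21 xi < real n" "real n < n2 l beta m s d11 d22 d21 xi"
    and "\<forall>\<^sub>F tau in nhds (tau_nj l beta m s d11 d22 d21 xi n j).
           charfun l beta m s d11 d22 d21 xi n (lam tau) tau = 0"
    and "lam (tau_nj l beta m s d11 d22 d21 xi n j) = \<i> * complex_of_real (omega_n l beta m s d11 d22 d21 xi n)"
    and "(lam has_vector_derivative lam') (at (tau_nj l beta m s d11 d22 d21 xi n j))"
  shows "Re lam' > 0"
proof -
  define t0 where "t0 = tau_nj l beta m s d11 d22 d21 xi n j"
  define L where "L = lam t0"
  define w where "w = omega_n l beta m s d11 d22 d21 xi n"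
  define T where "T = Tn l beta m s d11 d22 n"
  define J where "J = Jn l beta m s d11 d22 xi n"
  define K where "K = Kn l beta m d21 xi n"
  define P where "P = Pn l beta m s d11 d22 xi n"
  define Q where "Q = Qn l beta m s d11 d22 d21 xi n"
  note jk = JK_facts[OF assms(1-9) assms(10-11) assms(13-16)]
  have Qn: "Q < 0" unfolding Q_def Qn_def using jk by (simp add: mult_pos_neg)
  define Sq where "Sq = sqrt (P^2 - 4*Q)"
  have "P^2 - 4*Q > P^2" using Qn by simp
  then have "Sq > sqrt (P^2)" unfolding Sq_def by (simp only: real_sqrt_less_iff)
  moreover have "sqrt (P^2) \<ge> P" by simp
  ultimately have SqP: "Sq > P" "Sq > - P" using real_sqrt_abs by (simp_all add: abs_less_iff)
  have wdef: "w = sqrt ((- P + Sq)/2)" unfolding w_def omega_n_def P_def Q_def Sq_def ..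
  have wpos: "w > 0" unfolding wdef using SqP by simp
  have w2: "w^2 = (- P + Sq)/2" unfolding wdef using SqP by simp
  have Pe: "P = T^2 - 2*J" unfolding P_def Pn_def T_def J_def ..
  have S: "T^2 - 2*J + 2*w^2 > 0" using w2 Pe SqP by simp
  have ev: "\<forall>\<^sub>F tau in nhds t0. charfun l beta m s d11 d22 d21 xi n (lam tau) tau = 0"
    using assms(17) unfolding t0_def .
  have g0: "charfun l beta m s d11 d22 d21 xi n (lam t0) t0 = 0" using eventually_nhds_x_imp_x[OF ev] .
  have evat: "\<forall>\<^sub>F tau in at t0 within UNIV. charfun l beta m s d11 d22 d21 xi n (lam tau) tau = 0"
    using ev unfolding eventually_at_filter by (rule eventually_mono) simp
  have dlam: "(lam has_vector_derivative lam') (at t0)" using assms(19) unfolding t0_def .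
  note dg = charfun_deriv[OF dlam, of l beta m s d11 d22 d21 xi n]
  define G' where "G' = 2 * lam t0 * lam' - complex_of_real (Tn l beta m s d11 d22 n) * lam'
      + complex_of_real (Kn l beta m d21 xi n) * exp (- lam t0 * complex_of_real t0) * (- (lam t0 + lam' * complex_of_real t0))"
  have "((\<lambda>_. 0::complex) has_vector_derivative G') (at t0 within UNIV)"
    using dg[folded G'_def] unfolding has_vector_derivative_def
    by (rule has_derivative_transform_eventually) (use evat g0 in auto)
  then have "G' = 0" using vector_derivative_unique_at[OF has_vector_derivative_const] by auto
  then have e2: "2 * L * lam' - complex_of_real T * lam' + (complex_of_real K * exp (- L * complex_of_real t0)) * (- (L + lam' * complex_of_real t0)) = 0"
    unfolding G'_def L_def T_def K_def by simp
  have e1: "L^2 - complex_of_real T * L + complex_of_real J + (complex_of_real K * exp (- L * complex_of_real t0)) = 0"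
    using g0 unfolding charfun_eq L_def T_def J_def K_def by simp
  have hL: "L = \<i> * complex_of_real w" unfolding L_def w_def t0_def using assms(18) .
  show ?thesis by (rule key[OF hL e1 e2 wpos S])
qed

end
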